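(* Let $\bar{\boldsymbol{W}}^{\star},\bar{\boldsymbol{S}}^{\star}\in\mathbb{C}^{L\times L}$ be an optimal solution of problem (SDR2) defined in the context, and assume $\bar{\boldsymbol{g}}_0^H\bar{\boldsymbol{W}}^{\star}\bar{\boldsymbol{g}}_0>0$. Define $$\bar{\boldsymbol{W}}^{\mathrm{opt}}=\frac{\bar{\boldsymbol{W}}^{\star}\bar{\boldsymbol{g}}_0\bar{\boldsymbol{g}}_0^H\bar{\boldsymbol{W}}^{\star}}{\bar{\boldsymbol{g}}_0^H\bar{\boldsymbol{W}}^{\star}\bar{\boldsymbol{g}}_0},\qquad \bar{\boldsymbol{S}}^{\mathrm{opt}}=\bar{\boldsymbol{W}}^{\star}+\bar{\boldsymbol{S}}^{\star}-\bar{\boldsymbol{W}}^{\mathrm{opt}}.$$ Then $\mathrm{rank}(\bar{\boldsymbol{W}}^{\mathrm{opt}})=1$, the pair $(\bar{\boldsymbol{W}}^{\mathrm{opt}},\bar{\boldsymbol{S}}^{\mathrm{opt}})$ is feasible for (P2) (in particular $\bar{\boldsymbol{S}}^{\mathrm{opt}}\succeq\boldsymbol{0}$), and $R(\bar{\boldsymbol{W}}^{\mathrm{opt}},\bar{\boldsymbol{S}}^{\mathrm{opt}})=R(\bar{\boldsymbol{W}}^{\star},\bar{\boldsymbol{S}}^{\star})$. Consequently the optimal values of (SDR2) and (P2) coincide and $(\bar{\boldsymbol{W}}^{\mathrm{opt}},\bar{\boldsymbol{S}}^{\mathrm{opt}})$ is an optimal solution of (P2).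
   Context: Fix integers $N\ge L\ge1$, $K\ge1$, a matrix $\boldsymbol{U}\in\mathbb{C}^{N\times L}$ with orthonormal columns, vectors $\bar{\boldsymbol{g}}_0,\bar{\boldsymbol{g}}_1,\dots,\bar{\boldsymbol{g}}_{K+1}\in\mathbb{C}^{L}$, noise powers $\sigma_0^2,\sigma_1^2,\dots,\sigma_{K+1}^2>0$, $\sigma_s^2>0$, a complex number $\beta_s\neq0$, an integer $T\ge1$, thresholds $\Gamma_\theta,\Gamma_r>0$, $Q\ge0$, $P>0$, and $0<\zeta\le1$. Let $\mathcal{K}_{\mathrm{ER}}=\{1,\dots,K\}$ and $\mathcal{K}_{\mathrm{EAV}}=\{1,\dots,K+1\}$. Let $\boldsymbol{A},\dot{\boldsymbol{A}}_\theta,\dot{\boldsymbol{A}}_r\in\mathbb{C}^{N\times N}$ be given matrices (in the paper, $\boldsymbol{A}=\boldsymbol{a}\boldsymbol{a}^T$ for the near-field steering vector $\boldsymbol{a}$ of the target and $\dot{\boldsymbol{A}}_\theta,\dot{\boldsymbol{A}}_r$ its partial derivatives with respect to target angle and range). For Hermitian $\bar{\boldsymbol{W}},\bar{\boldsymbol{S}}\in\mathbb{C}^{L\times L}$ set $\boldsymbol{R}_x=\boldsymbol{U}(\bar{\boldsymbol{W}}+\bar{\boldsymbol{S}})\boldsymbol{U}^H$ and, for $\dot{\boldsymbol{A}}\in\{\dot{\boldsymbol{A}}_\theta,\dot{\boldsymbol{A}}_r\}$, $$\mathrm{CRB}_{\dot{\boldsymbol{A}}}(\bar{\boldsymbol{W}},\bar{\boldsymbol{S}})=\frac{\sigma_s^2}{2|\beta_s|^2T}\cdot\frac{\mathrm{tr}(\boldsymbol{A}\boldsymbol{R}_x\boldsymbol{A}^H)}{\mathrm{tr}(\dot{\boldsymbol{A}}\boldsymbol{R}_x\dot{\boldsymbol{A}}^H)\,\mathrm{tr}(\boldsymbol{A}\boldsymbol{R}_x\boldsymbol{A}^H)-|\mathrm{tr}(\boldsymbol{A}\boldsymbol{R}_x\dot{\boldsymbol{A}}^H)|^2}$$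 (the CRBs for angle and range are $\mathrm{CRB}_{\dot{\boldsymbol{A}}_\theta}$ and $\mathrm{CRB}_{\dot{\boldsymbol{A}}_r}$). Define the SINRs $\gamma_k(\bar{\boldsymbol{W}},\bar{\boldsymbol{S}})=\dfrac{\bar{\boldsymbol{g}}_k^H\bar{\boldsymbol{W}}\bar{\boldsymbol{g}}_k}{\bar{\boldsymbol{g}}_k^H\bar{\boldsymbol{S}}\bar{\boldsymbol{g}}_k+\sigma_k^2}$ for $k=0,1,\dots,K+1$, and the secrecy rate $$R(\bar{\boldsymbol{W}},\bar{\boldsymbol{S}})=\min_{k\in\mathcal{K}_{\mathrm{EAV}}}\Big(\log_2(1+\gamma_0(\bar{\boldsymbol{W}},\bar{\boldsymbol{S}}))-\log_2(1+\gamma_k(\bar{\boldsymbol{W}},\bar{\boldsymbol{S}}))\Big)^+,$$ where $(x)^+=\max(x,0)$. Problem (P2) is: maximize $R(\bar{\boldsymbol{W}},\bar{\boldsymbol{S}})$ over Hermitian $\bar{\boldsymbol{W}},\bar{\boldsymbol{S}}\in\mathbb{C}^{L\times L}$ subject to (i) $\mathrm{CRB}_{\dot{\boldsymbol{A}}_\theta}(\bar{\boldsymbol{W}},\bar{\boldsymbol{S}})\le\Gamma_\theta$ and $\mathrm{CRB}_{\dot{\boldsymbol{A}}_r}(\bar{\boldsymbol{W}},\bar{\boldsymbol{S}})\le\Gamma_r$ (with the denominators required to be positive); (ii) $\zeta\bar{\boldsymbol{g}}_k^H(\bar{\boldsymbol{W}}+\bar{\boldsymbol{S}})\bar{\boldsymbol{g}}_k\ge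 Q$ for all $k\in\mathcal{K}_{\mathrm{ER}}$; (iii) $\mathrm{Tr}(\bar{\boldsymbol{W}}+\bar{\boldsymbol{S}})\le P$; (iv) $\bar{\boldsymbol{W}}\succeq\boldsymbol{0}$, $\bar{\boldsymbol{S}}\succeq\boldsymbol{0}$; (v) $\mathrm{rank}(\bar{\boldsymbol{W}})\le1$. Problem (SDR2) is the same problem with constraint (v) removed. *)

theory Defs
  imports "HOL-Analysis.Analysis"
begin

text \<open>Complex matrices are rendered as complex^'c^'r (r rows, c columns);
 the dimensions N and L are the cardinalities of finite index types.\<close>

definition cadj :: "complex^'m^'n \<Rightarrow> complex^'n^'m" where
  "cadj M = (\<chi> i j. cnj (M$j$i))"

definition hermitian :: "complex^'n^'n \<Rightarrow> bool" where
  "hermitian M \<longleftrightarrow> cadj M = M"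

definition qform :: "complex^'n \<Rightarrow> complex^'n^'n \<Rightarrow> complex" where
  "qform x M = (\<Sum>i\<in>UNIV. \<Sum>j\<in>UNIV. cnj (x$i) * M$i$j * x$j)"

definition psd :: "complex^'n^'n \<Rightarrow> bool" where
  "psd M \<longleftrightarrow> hermitian M \<and> (\<forall>x. 0 \<le> Re (qform x M))"

definition outer :: "complex^'n \<Rightarrow> complex^'n \<Rightarrow> complex^'n^'n" where
  "outer v w = (\<chi> i j. v$i * cnj (w$j))"

definition crb_num :: "complex^'n^'n \<Rightarrow> complex^'n^'n \<Rightarrow> real" where
  "crb_num A Rx = Re (trace (A ** Rx ** cadj A))"

definition crb_den :: "complex^'n^'n \<Rightarrow> complex^'n^'n \<Rightarrow> complex^'n^'n \<Rightarrow> real" where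
  "crb_den A Ad Rx = Re (trace (Ad ** Rx ** cadj Ad)) * Re (trace (A ** Rx ** cadj A))
                     - (cmod (trace (A ** Rx ** cadj Ad)))\<^sup>2"

definition CRB :: "real \<Rightarrow> complex \<Rightarrow> nat \<Rightarrow> complex^'n^'n \<Rightarrow> complex^'n^'n \<Rightarrow> complex^'n^'n \<Rightarrow> real" where
  "CRB \<sigma>s\<^sub>2 \<beta> T A Ad Rx = \<sigma>s\<^sub>2 / (2 * (cmod \<beta>)\<^sup>2 * real T) * (crb_num A Rx / crb_den A Ad Rx)"

definition Rx :: "complex^'l^'n \<Rightarrow> complex^'l^'l \<Rightarrow> complex^'l^'l \<Rightarrow> complex^'n^'n" where
  "Rx U W S = U ** (W + S) ** cadj U"

definition sinr :: "complex^'l \<Rightarrow> real \<Rightarrow> complex^'l^'l \<Rightarrow> complex^'l^'l \<Rightarrow> real" where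
  "sinr g sig2 W S = Re (qform g W) / (Re (qform g S) + sig2)"

definition secrecy_rate :: "(nat \<Rightarrow> complex^'l) \<Rightarrow> (nat \<Rightarrow> real) \<Rightarrow> nat
      \<Rightarrow> complex^'l^'l \<Rightarrow> complex^'l^'l \<Rightarrow> real" where
  "secrecy_rate g sig2 K W S =
     Min ((\<lambda>k. max (log 2 (1 + sinr (g 0) (sig2 0) W S) - log 2 (1 + sinr (g k) (sig2 k) W S)) 0)
          ` {1..K+1})"

definition sdr2_feasible ::
  "complex^'l^'n \<Rightarrow> complex^'n^'n \<Rightarrow> complex^'n^'n \<Rightarrow> complex^'n^'n
   \<Rightarrow> real \<Rightarrow> complex \<Rightarrow> nat \<Rightarrow> real \<Rightarrow> real
   \<Rightarrow> (nat \<Rightarrow> complex^'l) \<Rightarrow> nat \<Rightarrow> real \<Rightarrow> real \<Rightarrow> real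
   \<Rightarrow> complex^'l^'l \<Rightarrow> complex^'l^'l \<Rightarrow> bool" where
  "sdr2_feasible U A Ath Ar \<sigma>s\<^sub>2 \<beta> T \<Gamma>th \<Gamma>r g K \<zeta> Q P W S \<longleftrightarrow>
     hermitian W \<and> hermitian S \<and>
     crb_den A Ath (Rx U W S) > 0 \<and> CRB \<sigma>s\<^sub>2 \<beta> T A Ath (Rx U W S) \<le> \<Gamma>th \<and>
     crb_den A Ar (Rx U W S) > 0 \<and> CRB \<sigma>s\<^sub>2 \<beta> T A Ar (Rx U W S) \<le> \<Gamma>r \<and>
     (\<forall>k\<in>{1..K}. \<zeta> * Re (qform (g k) (W + S)) \<ge> Q) \<and>
     Re (trace (W + S)) \<le> P \<and>
     psd W \<and> psd S"

definition p2_feasible ::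
  "complex^'l^'n \<Rightarrow> complex^'n^'n \<Rightarrow> complex^'n^'n \<Rightarrow> complex^'n^'n
   \<Rightarrow> real \<Rightarrow> complex \<Rightarrow> nat \<Rightarrow> real \<Rightarrow> real
   \<Rightarrow> (nat \<Rightarrow> complex^'l) \<Rightarrow> nat \<Rightarrow> real \<Rightarrow> real \<Rightarrow> real
   \<Rightarrow> complex^'l^'l \<Rightarrow> complex^'l^'l \<Rightarrow> bool" where
  "p2_feasible U A Ath Ar \<sigma>s\<^sub>2 \<beta> T \<Gamma>th \<Gamma>r g K \<zeta> Q P W S \<longleftrightarrow>
     sdr2_feasible U A Ath Ar \<sigma>s\<^sub>2 \<beta> T \<Gamma>th \<Gamma>r g K \<zeta> Q P W S \<and> rank W \<le> 1"

end

theory Submission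
  imports Defs
begin

definition hp :: "complex^'n \<Rightarrow> complex^'n \<Rightarrow> complex" where
  "hp x y = (\<Sum>i\<in>UNIV. cnj (x$i) * y$i)"

lemma qform_hp: "qform x M = hp x (M *v x)"
  by (simp add: qform_def hp_def matrix_vector_mult_def sum_distrib_left mult.assoc)

lemma herm_entry: "hermitian M \<Longrightarrow> M$j$i = cnj (M$i$j)"
  unfolding hermitian_def cadj_def by (metis (no_types, lifting) complex_cnj_cnj vec_lambda_beta)

lemma herm_entry': "hermitian M \<Longrightarrow> cnj (M$j$i) = M$i$j"
  using herm_entry by (metis complex_cnj_cnj)

lemma hp_herm: assumes "hermitian M" shows "hp x (M *v y) = cnj (hp y (M *v x))"
proof -
  have "hp x (M *v y) = (\<Sum>i\<in>UNIV. \<Sum>j\<in>UNIV. cnj (x$i) * M$i$j * y$j)"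
    by (simp add: hp_def matrix_vector_mult_def sum_distrib_left mult.assoc)
  also have "\<dots> = (\<Sum>j\<in>UNIV. \<Sum>i\<in>UNIV. cnj (x$i) * M$i$j * y$j)"
    by (rule sum.swap)
  also have "\<dots> = cnj (\<Sum>j\<in>UNIV. \<Sum>i\<in>UNIV. cnj (y$j) * M$j$i * x$i)"
    by (simp add: herm_entry'[OF assms] mult.commute mult.left_commute)
  also have "\<dots> = cnj (hp y (M *v x))"
    by (simp add: hp_def matrix_vector_mult_def sum_distrib_left mult.assoc)
  finally show ?thesis .
qed

lemma qform_real: "hermitian M \<Longrightarrow> Im (qform x M) = 0"
  using hp_herm[of M x x] by (simp add: qform_hp complex_eq_iff)

lemma qform_add: "qform x (M + N) = qform x M + qform x N"
  by (simp add: qform_def sum.distrib algebra_simps)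
lemma qform_diff: "qform x (M - N) = qform x M - qform x N"
  by (simp add: qform_def sum_subtractf algebra_simps)

lemma hp_add2: "hp x (y + z) = hp x y + hp x z"
  by (simp add: hp_def sum.distrib algebra_simps)
lemma hp_add1: "hp (x + y) z = hp x z + hp y z"
  by (simp add: hp_def sum.distrib algebra_simps)
lemma hp_scale2: "hp x (t *s y) = t * hp x y"
  by (simp add: hp_def sum_distrib_left algebra_simps)
lemma hp_scale1: "hp (t *s x) y = cnj t * hp x y"
  by (simp add: hp_def sum_distrib_left algebra_simps)

lemma mv_scale: "M *v (t *s x) = t *s (M *v (x::complex^'n))"
  unfolding vec_eq_iff matrix_vector_mult_def by (auto simp: sum_distrib_left intro!: sum.cong simp: mult_ac)

lemma cs:
  assumes "psd W" and r: "Re (qform v W) > 0"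
  shows "(cmod (hp x (W *v v)))\<^sup>2 \<le> Re (qform x W) * Re (qform v W)"
proof -
  have H: "hermitian W" using assms unfolding psd_def by auto
  define b where "b = hp x (W *v v)"
  define rr where "rr = Re (qform v W)"
  have qv: "qform v W = of_real rr" using qform_real[OF H, of v] unfolding rr_def
    by (simp add: complex_eq_iff)
  have qx: "qform x W = of_real (Re (qform x W))" using qform_real[OF H, of x]
    by (simp add: complex_eq_iff)
  define t where "t = - cnj b / of_real rr"
  have c2: "hp v (W *v x) = cnj b" using hp_herm[OF H, of v x] b_def by simp
  have "qform (x + t *s v) W = qform x W + t * b + cnj t * cnj b + cnj t * t * qform v W"
    by (simp add: qform_hp matrix_vector_right_distrib mv_scale hp_add1 hp_add2 hp_scale1 hp_scale2 b_def c2 algebra_simps)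
  also have "\<dots> = of_real (Re (qform x W) - (cmod b)\<^sup>2 / rr)"
  proof -
    have rp: "rr > 0" using r rr_def by simp
    have bb: "b * cnj b = of_real ((cmod b)\<^sup>2)" by (rule complex_norm_square[symmetric])
    have bb': "cnj b * b = of_real ((cmod b)\<^sup>2)" by (metis complex_norm_square mult.commute)
    have e1: "- cnj b / of_real rr * b = - of_real ((cmod b)\<^sup>2 / rr)" using bb' by (simp add: mult.commute mult.left_commute)
    have e2: "cnj (- cnj b / of_real rr) * cnj b = - of_real ((cmod b)\<^sup>2 / rr)" using bb by simp
    have e3: "cnj (- cnj b / of_real rr) * (- cnj b / of_real rr) * of_real rr = of_real ((cmod b)\<^sup>2 / rr)"
    proof -
      have "cnj (- cnj b / of_real rr) * (- cnj b / of_real rr) * of_real rr = b * cnj b / of_real rr"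
        using rp by (simp add: field_simps)
      then show ?thesis using bb by simp
    qed
    show ?thesis unfolding t_def qv e1 e2 e3
      apply (subst qx) by simp
  qed
  finally have "0 \<le> Re (qform x W) - (cmod b)\<^sup>2 / rr"
    using assms(1) unfolding psd_def by (metis Re_complex_of_real)
  then show ?thesis using r unfolding b_def rr_def by (simp add: field_simps)
qed

lemma hermitian_iff: "hermitian M \<longleftrightarrow> (\<forall>i j. M$i$j = cnj (M$j$i))"
  unfolding hermitian_def cadj_def vec_eq_iff by (simp add: eq_commute[of "cnj _"])

lemma qform_outer:
  fixes u x :: "complex^'n"
  shows "qform x (\<chi> i j. (outer u u)$i$j / c) = hp x u * cnj (hp x u) / c"
proof -
  have "qform x (\<chi> i j. (outer u u)$i$j / c) = (\<Sum>i\<in>UNIV. \<Sum>j\<in>UNIV. (cnj (x$i) * u$i) * (x$j * cnj (u$j))) / c"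
    by (simp add: qform_def outer_def sum_divide_distrib mult_ac)
  also have "\<dots> = hp x u * cnj (hp x u) / c"
    by (simp add: hp_def sum_product)
  finally show ?thesis .
qed

lemma Min_mono_img:
  assumes "finite A" "A \<noteq> {}" "\<And>k. k \<in> A \<Longrightarrow> f k \<le> (g k::real)"
  shows "Min (f ` A) \<le> Min (g ` A)"
proof -
  have "Min (g ` A) \<in> g ` A" using assms by (intro Min_in) auto
  then obtain k where k: "k \<in> A" "Min (g ` A) = g k" by auto
  have "Min (f ` A) \<le> f k" using assms k by auto
  also have "\<dots> \<le> g k" using assms(3) k(1) .
  finally show ?thesis using k by simp
qed

lemma sinr_mono_aux:
  fixes a a' D :: real
  assumes "a' \<le> a" "0 \<le> a'" "0 < D"
  shows "a' / (D + a - a') \<le> a / D"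
proof -
  have "a' / (D + a - a') \<le> a' / D"
    using assms by (intro divide_left_mono) auto
  also have "\<dots> \<le> a / D" using assms by (intro divide_right_mono) auto
  finally show ?thesis .
qed


lemma cadj_add: "cadj (A + B) = cadj A + cadj B"
  by (simp add: cadj_def vec_eq_iff)
lemma cadj_diff: "cadj (A - B) = cadj A - cadj B"
  by (simp add: cadj_def vec_eq_iff)

theorem proposition1:
  fixes U :: "complex^'l^'n"
    and A Ath Ar :: "complex^'n^'n"
    and g :: "nat \<Rightarrow> complex^'l"
    and sig2 :: "nat \<Rightarrow> real"
    and \<sigma>s\<^sub>2 :: real and \<beta> :: complex and T :: nat and K :: nat
    and \<Gamma>th \<Gamma>r Q P \<zeta> :: real
    and Wst Sst :: "complex^'l^'l"
  assumes dims: "CARD('l) \<le> CARD('n)"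
    and orthonormal: "cadj U ** U = mat 1"
    and K: "K \<ge> 1"
    and noise: "\<forall>k\<le>K+1. sig2 k > 0"
    and sens_noise: "\<sigma>s\<^sub>2 > 0"
    and beta: "\<beta> \<noteq> 0"
    and T: "T \<ge> 1"
    and thresholds: "\<Gamma>th > 0" "\<Gamma>r > 0" "Q \<ge> 0" "P > 0" "0 < \<zeta>" "\<zeta> \<le> 1"
    and opt_feas: "sdr2_feasible U A Ath Ar \<sigma>s\<^sub>2 \<beta> T \<Gamma>th \<Gamma>r g K \<zeta> Q P Wst Sst"
    and opt_max: "\<forall>W S. sdr2_feasible U A Ath Ar \<sigma>s\<^sub>2 \<beta> T \<Gamma>th \<Gamma>r g K \<zeta> Q P W S
                    \<longrightarrow> secrecy_rate g sig2 K W S \<le> secrecy_rate g sig2 K Wst Sst"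
    and pos: "Re (qform (g 0) Wst) > 0"
  shows "let Wopt = (\<chi> i j. (outer (Wst *v g 0) (Wst *v g 0))$i$j / qform (g 0) Wst);
             Sopt = Wst + Sst - Wopt
         in rank Wopt = 1
          \<and> p2_feasible U A Ath Ar \<sigma>s\<^sub>2 \<beta> T \<Gamma>th \<Gamma>r g K \<zeta> Q P Wopt Sopt
          \<and> psd Sopt
          \<and> secrecy_rate g sig2 K Wopt Sopt = secrecy_rate g sig2 K Wst Sst
          \<and> (\<forall>W S. sdr2_feasible U A Ath Ar \<sigma>s\<^sub>2 \<beta> T \<Gamma>th \<Gamma>r g K \<zeta> Q P W S
                    \<longrightarrow> secrecy_rate g sig2 K W S \<le> secrecy_rate g sig2 K Wopt Sopt)
          \<and> (\<forall>W S. p2_feasible U A Ath Ar \<sigma>s\<^sub>2 \<beta> T \<Gamma>th \<Gamma>r g K \<zeta> Q P W S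
                    \<longrightarrow> secrecy_rate g sig2 K W S \<le> secrecy_rate g sig2 K Wopt Sopt)"
proof -
  define v where "v = g 0"
  define u where "u = Wst *v v"
  define c where "c = qform v Wst"
  define Wopt where "Wopt = (\<chi> i j. (outer u u)$i$j / c :: complex^'l^'l)"
  define Sopt where "Sopt = Wst + Sst - Wopt"
  have HW: "hermitian Wst" "hermitian Sst" "psd Wst" "psd Sst"
    using opt_feas unfolding sdr2_feasible_def by auto
  define r where "r = Re c"
  have rpos: "r > 0" using pos by (simp add: r_def c_def v_def)
  have c_real: "c = of_real r" using qform_real[OF HW(1), of v]
    by (simp add: complex_eq_iff r_def c_def)
  have hpvu: "hp v u = c" by (simp add: qform_hp u_def c_def)
  have qWopt: "\<And>x. qform x Wopt = of_real ((cmod (hp x u))\<^sup>2 / r)"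
    unfolding Wopt_def qform_outer c_real complex_norm_square[symmetric] by simp
  have csx: "\<And>x. (cmod (hp x u))\<^sup>2 \<le> Re (qform x Wst) * r"
    using cs[OF HW(3)] pos unfolding u_def r_def c_def v_def by auto
  have csx': "\<And>x. (cmod (hp x u))\<^sup>2 / r \<le> Re (qform x Wst)"
    using csx rpos by (simp add: divide_le_eq)
  have nn: "\<And>x. 0 \<le> (cmod (hp x u))\<^sup>2 / r" using rpos by simp
  have sum_eq: "Wopt + Sopt = Wst + Sst" by (simp add: Sopt_def)
  have qWopt_v: "(cmod (hp v u))\<^sup>2 / r = r"
    using rpos by (simp add: hpvu c_real power2_eq_square)
  have qSopt: "\<And>x. Re (qform x Sopt) = Re (qform x Wst) + Re (qform x Sst) - (cmod (hp x u))\<^sup>2 / r"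
    by (simp add: Sopt_def qform_add qform_diff qWopt)
  have herm_Wopt: "hermitian Wopt"
    unfolding hermitian_iff Wopt_def outer_def c_real by (simp add: mult.commute)
  have herm_Sopt: "hermitian Sopt"
    using HW(1,2) herm_Wopt unfolding hermitian_def Sopt_def cadj_add cadj_diff by simp
  have psd_Wopt: "psd Wopt"
    unfolding psd_def using herm_Wopt qWopt nn by simp
  have psd_Sopt: "psd Sopt"
    unfolding psd_def
  proof (intro conjI allI herm_Sopt)
    fix x
    have "0 \<le> Re (qform x Sst)" using HW(4) unfolding psd_def by auto
    then show "0 \<le> Re (qform x Sopt)" using qSopt[of x] csx'[of x] by linarith
  qed
  have c_ne: "c \<noteq> 0" using rpos c_real by auto
  have u_ne: "u \<noteq> 0" using hpvu c_ne by (auto simp: hp_def)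
  then obtain i0 where i0: "u$i0 \<noteq> 0" by (auto simp: vec_eq_iff)
  define w where "w = (\<chi> j. cnj (u$j))"
  have w_ne: "w \<noteq> 0" using i0 by (auto simp: w_def vec_eq_iff)
  have roww: "\<And>i. row i Wopt = (u$i / c) *s w"
    by (simp add: row_def Wopt_def outer_def w_def vec_eq_iff)
  have rows_sub: "rows Wopt \<subseteq> vec.span {w}"
    unfolding rows_def using roww by (auto intro: vec.span_scale vec.span_base)
  have "w = (c / u$i0) *s row i0 Wopt" using roww i0 c_ne by (simp add: vec_eq_iff)
  hence "w \<in> vec.span (rows Wopt)"
    by (metis (mono_tags, lifting) rows_def mem_Collect_eq UNIV_I vec.span_base vec.span_scale)
  hence "vec.span (rows Wopt) = vec.span {w}" using rows_sub by (simp add: vec.span_eq)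
  hence rank1: "rank Wopt = 1" unfolding row_rank_def_gen using w_ne
    by (metis vec.dim_span vec.dim_singleton)
  have feas: "sdr2_feasible U A Ath Ar \<sigma>s\<^sub>2 \<beta> T \<Gamma>th \<Gamma>r g K \<zeta> Q P Wopt Sopt"
    using opt_feas herm_Wopt herm_Sopt psd_Wopt psd_Sopt
    unfolding sdr2_feasible_def Rx_def sum_eq by auto
  have p2: "p2_feasible U A Ath Ar \<sigma>s\<^sub>2 \<beta> T \<Gamma>th \<Gamma>r g K \<zeta> Q P Wopt Sopt"
    unfolding p2_feasible_def using feas rank1 by simp
  have s0: "sinr (g 0) (sig2 0) Wopt Sopt = sinr (g 0) (sig2 0) Wst Sst"
    unfolding sinr_def qSopt qWopt Re_complex_of_real v_def[symmetric] qWopt_v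
    using qWopt_v unfolding r_def c_def by simp
  have sk: "sinr (g k) (sig2 k) Wopt Sopt \<le> sinr (g k) (sig2 k) Wst Sst"
       "0 \<le> sinr (g k) (sig2 k) Wopt Sopt"
    if k: "k \<in> {1..K+1}" for k
  proof -
    have sp: "sig2 k > 0" using noise k by auto
    have s_nn: "0 \<le> Re (qform (g k) Sst)" using HW(4) unfolding psd_def by auto
    define D where "D = Re (qform (g k) Sst) + sig2 k"
    have Dp: "D > 0" using sp s_nn D_def by simp
    have eq: "sinr (g k) (sig2 k) Wopt Sopt = (cmod (hp (g k) u))\<^sup>2 / r /
        (D + Re (qform (g k) Wst) - (cmod (hp (g k) u))\<^sup>2 / r)"
      unfolding sinr_def qSopt qWopt Re_complex_of_real D_def by (simp add: algebra_simps)
    show "sinr (g k) (sig2 k) Wopt Sopt \<le> sinr (g k) (sig2 k) Wst Sst"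
      unfolding eq using sinr_mono_aux[OF csx' nn Dp] by (simp add: sinr_def D_def)
    show "0 \<le> sinr (g k) (sig2 k) Wopt Sopt"
      unfolding eq using csx'[of "g k"] nn[of "g k"] Dp rpos by (intro divide_nonneg_nonneg) auto
  qed
  have ge: "secrecy_rate g sig2 K Wst Sst \<le> secrecy_rate g sig2 K Wopt Sopt"
    unfolding secrecy_rate_def
  proof (rule Min_mono_img)
    fix k assume k: "k \<in> {1..K+1}"
    have s_nn: "0 \<le> sinr (g k) (sig2 k) Wst Sst" using sk(1,2)[OF k] by linarith
    have "log 2 (1 + sinr (g k) (sig2 k) Wopt Sopt) \<le> log 2 (1 + sinr (g k) (sig2 k) Wst Sst)"
      using sk[OF k] s_nn by simp
    then show "max (log 2 (1 + sinr (g 0) (sig2 0) Wst Sst) - log 2 (1 + sinr (g k) (sig2 k) Wst Sst)) 0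
      \<le> max (log 2 (1 + sinr (g 0) (sig2 0) Wopt Sopt) - log 2 (1 + sinr (g k) (sig2 k) Wopt Sopt)) 0"
      unfolding s0 by simp
  qed auto
  have le: "secrecy_rate g sig2 K Wopt Sopt \<le> secrecy_rate g sig2 K Wst Sst"
    using opt_max feas by blast
  have rate_eq: "secrecy_rate g sig2 K Wopt Sopt = secrecy_rate g sig2 K Wst Sst"
    using ge le by simp
  show ?thesis
    unfolding Let_def
    using rank1 p2 psd_Sopt rate_eq opt_max
    unfolding Wopt_def[symmetric, unfolded u_def c_def v_def] Sopt_def[symmetric]
      p2_feasible_def
    by (auto simp: u_def c_def v_def)
qed

end
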